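(* A uniform preorder $(A,R)$ is cartesian if and only if there exist a function $\wedge:A\times A\to A$ and an element $\top\in A$ such that the relations $$\tau=\{(a,\top)\mid a\in A\},\quad \lambda=\{(a\wedge b,a)\mid a,b\in A\},\quad \rho=\{(a\wedge b,b)\mid a,b\in A\}$$ are in $R$, and for all $r,s\in R$ the relation $\langle\!\langle r,s\rangle\!\rangle=\{(a,b\wedge c)\mid (a,b)\in r,(a,c)\in s\}$ is in $R$.
   Context: A uniform preorder is a pair $(A,R)$ with $A$ a set and $R\subseteq P(A\times A)$ such that $\mathrm{id}_A\in R$, $s\circ r\in R$ whenever $r,s\in R$, and $s\in R$ whenever $r\in R$ and $s\subseteq r$. A monotone map $f:(A,R)\to(B,S)$ is a function $f:A\to B$ with $\{(fa,fa')\mid (a,a')\in r\}\in S$ for all $r\in R$; for monotone $f,g$, $f\le g$ iff $\{(fa,ga)\mid a\in A\}\in S$. These form a locally ordered category $\mathsf{UOrd}$, in which an adjunction $f\dashv g$ ($f:X\to Y$, $g:Y\to X$) means $\mathrm{id}_X\le g\circ f$ and $f\circ g\le\mathrm{id}_Y$. $\mathsf{UOrd}$ has finite 2-products: the terminal object is a singleton set with its unique uniform preorder structure, and the product of $(A,R)$ and $(B,S)$ is $(A\times B,R\otimes S)$ where $R\otimes S$ consists of all relations contained in some $r\times s=\{((a,b),(a',b'))\mid (a,a')\in r,(b,b')\in s\}$ with $r\in R,s\in S$. A uniform preorder $(A,R)$ is cartesian if the terminal projection $(A,R)\to 1$ and the diagonal $(A,R)\to(A,R)\times(A,R)$ have right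 adjoints in $\mathsf{UOrd}$. *)

theory Defs
  imports Main
begin

definition uniform_preorder :: "'a set \<Rightarrow> ('a \<times> 'a) set set \<Rightarrow> bool" where
  "uniform_preorder A R \<longleftrightarrow>
     R \<subseteq> Pow (A \<times> A) \<and>
     Id_on A \<in> R \<and>
     (\<forall>r\<in>R. \<forall>s\<in>R. r O s \<in> R) \<and>
     (\<forall>r\<in>R. \<forall>s. s \<subseteq> r \<longrightarrow> s \<in> R)"

text \<open>Note: the composite s \<circ> r (first r, then s) is the relational composition r O s.\<close>

definition rel_image :: "('a \<Rightarrow> 'b) \<Rightarrow> ('a \<times> 'a) set \<Rightarrow> ('b \<times> 'b) set" where
  "rel_image f r = {(f a, f a') | a a'. (a, a') \<in> r}"

definition monotone_map ::
  "'a set \<Rightarrow> ('a \<times> 'a) set set \<Rightarrow> 'b set \<Rightarrow> ('b \<times> 'b) set set \<Rightarrow> ('a \<Rightarrow> 'b) \<Rightarrow> bool" where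
  "monotone_map A R B S f \<longleftrightarrow> f ` A \<subseteq> B \<and> (\<forall>r\<in>R. rel_image f r \<in> S)"

definition map_le :: "'a set \<Rightarrow> ('b \<times> 'b) set set \<Rightarrow> ('a \<Rightarrow> 'b) \<Rightarrow> ('a \<Rightarrow> 'b) \<Rightarrow> bool" where
  "map_le A S f g \<longleftrightarrow> {(f a, g a) | a. a \<in> A} \<in> S"

definition uord_adjunction ::
  "'a set \<Rightarrow> ('a \<times> 'a) set set \<Rightarrow> 'b set \<Rightarrow> ('b \<times> 'b) set set \<Rightarrow> ('a \<Rightarrow> 'b) \<Rightarrow> ('b \<Rightarrow> 'a) \<Rightarrow> bool" where
  "uord_adjunction A R B S f g \<longleftrightarrow>
     monotone_map A R B S f \<and> monotone_map B S A R g \<and>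
     map_le A R id (g \<circ> f) \<and> map_le B S (f \<circ> g) id"

definition term_carrier :: "unit set" where "term_carrier = {()}"
definition term_rels :: "(unit \<times> unit) set set" where "term_rels = Pow (term_carrier \<times> term_carrier)"

definition rel_prod :: "('a \<times> 'a) set \<Rightarrow> ('b \<times> 'b) set \<Rightarrow> (('a \<times> 'b) \<times> ('a \<times> 'b)) set" where
  "rel_prod r s = {((a, b), (a', b')) | a a' b b'. (a, a') \<in> r \<and> (b, b') \<in> s}"

definition prod_rels :: "('a \<times> 'a) set set \<Rightarrow> ('b \<times> 'b) set set \<Rightarrow> (('a \<times> 'b) \<times> ('a \<times> 'b)) set set" where
  "prod_rels R S = {t. \<exists>r\<in>R. \<exists>s\<in>S. t \<subseteq> rel_prod r s}"

definition cartesian_up :: "'a set \<Rightarrow> ('a \<times> 'a) set set \<Rightarrow> bool" where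
  "cartesian_up A R \<longleftrightarrow>
     (\<exists>t :: unit \<Rightarrow> 'a. uord_adjunction A R term_carrier term_rels (\<lambda>_. ()) t) \<and>
     (\<exists>m :: 'a \<times> 'a \<Rightarrow> 'a. uord_adjunction A R (A \<times> A) (prod_rels R R) (\<lambda>a. (a, a)) m)"

end

theory Submission
  imports Defs
begin

theorem lemma3p2:
  fixes A :: "'a set" and R :: "('a \<times> 'a) set set"
  assumes "uniform_preorder A R"
  shows "cartesian_up A R \<longleftrightarrow>
    (\<exists>meet :: 'a \<Rightarrow> 'a \<Rightarrow> 'a. \<exists>top :: 'a.
       top \<in> A \<and> (\<forall>a\<in>A. \<forall>b\<in>A. meet a b \<in> A) \<and>
       {(a, top) | a. a \<in> A} \<in> R \<and>
       {(meet a b, a) | a b. a \<in> A \<and> b \<in> A} \<in> R \<and>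
       {(meet a b, b) | a b. a \<in> A \<and> b \<in> A} \<in> R \<and>
       (\<forall>r\<in>R. \<forall>s\<in>R. {(a, meet b c) | a b c. (a, b) \<in> r \<and> (a, c) \<in> s} \<in> R))"
proof -
  have sub: "R \<subseteq> Pow (A \<times> A)" and idA: "Id_on A \<in> R"
    and comp: "\<And>r s. r \<in> R \<Longrightarrow> s \<in> R \<Longrightarrow> r O s \<in> R"
    and down: "\<And>r s. r \<in> R \<Longrightarrow> s \<subseteq> r \<Longrightarrow> s \<in> R"
  proof -
    have u: "R \<subseteq> Pow (A \<times> A) \<and> Id_on A \<in> R \<and> (\<forall>r\<in>R. \<forall>s\<in>R. r O s \<in> R) \<and>
       (\<forall>r\<in>R. \<forall>s. s \<subseteq> r \<longrightarrow> s \<in> R)" using assms unfolding uniform_preorder_def .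
    show "R \<subseteq> Pow (A \<times> A)" using u by (rule conjunct1)
    show "Id_on A \<in> R" using u by simp
    show "\<And>r s. r \<in> R \<Longrightarrow> s \<in> R \<Longrightarrow> r O s \<in> R" using u by simp
    show "\<And>r s. r \<in> R \<Longrightarrow> s \<subseteq> r \<Longrightarrow> s \<in> R" using u by simp
  qed
  show ?thesis
  proof
    assume "cartesian_up A R"
    then obtain t :: "unit \<Rightarrow> 'a" and m :: "'a \<times> 'a \<Rightarrow> 'a" where
      t: "uord_adjunction A R term_carrier term_rels (\<lambda>_. ()) t" and
      m: "uord_adjunction A R (A \<times> A) (prod_rels R R) (\<lambda>a. (a, a)) m"
      unfolding cartesian_up_def by blast
    have topA: "t () \<in> A" using t
      unfolding uord_adjunction_def monotone_map_def term_carrier_def by auto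
    have tau: "{(a, t ()) | a. a \<in> A} \<in> R" using t
      unfolding uord_adjunction_def map_le_def by simp
    have mA: "\<forall>a\<in>A. \<forall>b\<in>A. m (a, b) \<in> A" using m
      unfolding uord_adjunction_def monotone_map_def by auto
    have mmon: "\<And>q. q \<in> prod_rels R R \<Longrightarrow> rel_image m q \<in> R" using m
      unfolding uord_adjunction_def monotone_map_def by auto
    have eta: "{(a, m (a, a)) | a. a \<in> A} \<in> R" using m
      unfolding uord_adjunction_def map_le_def by simp
    have "{((m p, m p), p) | p. p \<in> A \<times> A} \<in> prod_rels R R" using m
      unfolding uord_adjunction_def map_le_def by simp
    then obtain r s where rs: "r \<in> R" "s \<in> R"
      "{((m p, m p), p) | p. p \<in> A \<times> A} \<subseteq> rel_prod r s"
      unfolding prod_rels_def by blast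
    have lam: "{(m (a, b), a) | a b. a \<in> A \<and> b \<in> A} \<in> R"
    proof (rule down[OF rs(1)])
      show "{(m (a, b), a) | a b. a \<in> A \<and> b \<in> A} \<subseteq> r"
      proof
        fix x assume "x \<in> {(m (a, b), a) | a b. a \<in> A \<and> b \<in> A}"
        then obtain a b where x: "x = (m (a, b), a)" "a \<in> A" "b \<in> A" by blast
        then have "((m (a,b), m (a,b)), (a,b)) \<in> rel_prod r s" using rs(3) by blast
        then show "x \<in> r" using x unfolding rel_prod_def by auto
      qed
    qed
    have rho: "{(m (a, b), b) | a b. a \<in> A \<and> b \<in> A} \<in> R"
    proof (rule down[OF rs(2)])
      show "{(m (a, b), b) | a b. a \<in> A \<and> b \<in> A} \<subseteq> s"
      proof
        fix x assume "x \<in> {(m (a, b), b) | a b. a \<in> A \<and> b \<in> A}"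
        then obtain a b where x: "x = (m (a, b), b)" "a \<in> A" "b \<in> A" by blast
        then have "((m (a,b), m (a,b)), (a,b)) \<in> rel_prod r s" using rs(3) by blast
        then show "x \<in> s" using x unfolding rel_prod_def by auto
      qed
    qed
    have pair: "\<forall>r\<in>R. \<forall>s\<in>R. {(a, m (b, c)) | a b c. (a, b) \<in> r \<and> (a, c) \<in> s} \<in> R"
    proof (intro ballI)
      fix r s assume r: "r \<in> R" and s: "s \<in> R"
      have "rel_prod r s \<in> prod_rels R R" using r s unfolding prod_rels_def by blast
      then have im: "rel_image m (rel_prod r s) \<in> R" by (rule mmon)
      have "{(a, m (b, c)) | a b c. (a, b) \<in> r \<and> (a, c) \<in> s}
            \<subseteq> {(a, m (a, a)) | a. a \<in> A} O rel_image m (rel_prod r s)"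
      proof
        fix x assume "x \<in> {(a, m (b, c)) | a b c. (a, b) \<in> r \<and> (a, c) \<in> s}"
        then obtain a b c where x: "x = (a, m (b, c))" "(a, b) \<in> r" "(a, c) \<in> s" by blast
        have aA: "a \<in> A" using x(2) r sub by blast
        have "((a, a), (b, c)) \<in> rel_prod r s" using x unfolding rel_prod_def by blast
        then have "(m (a, a), m (b, c)) \<in> rel_image m (rel_prod r s)"
          unfolding rel_image_def by blast
        then show "x \<in> {(a, m (a, a)) | a. a \<in> A} O rel_image m (rel_prod r s)"
          using x(1) aA by blast
      qed
      then show "{(a, m (b, c)) | a b c. (a, b) \<in> r \<and> (a, c) \<in> s} \<in> R"
        by (rule down[OF comp[OF eta im]])
    qed
    show "\<exists>meet :: 'a \<Rightarrow> 'a \<Rightarrow> 'a. \<exists>top :: 'a.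
       top \<in> A \<and> (\<forall>a\<in>A. \<forall>b\<in>A. meet a b \<in> A) \<and>
       {(a, top) | a. a \<in> A} \<in> R \<and>
       {(meet a b, a) | a b. a \<in> A \<and> b \<in> A} \<in> R \<and>
       {(meet a b, b) | a b. a \<in> A \<and> b \<in> A} \<in> R \<and>
       (\<forall>r\<in>R. \<forall>s\<in>R. {(a, meet b c) | a b c. (a, b) \<in> r \<and> (a, c) \<in> s} \<in> R)"
      apply (rule exI[of _ "\<lambda>a b. m (a, b)"], rule exI[of _ "t ()"])
      using topA mA tau lam rho pair by simp
  next
    assume "\<exists>meet :: 'a \<Rightarrow> 'a \<Rightarrow> 'a. \<exists>top :: 'a.
       top \<in> A \<and> (\<forall>a\<in>A. \<forall>b\<in>A. meet a b \<in> A) \<and>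
       {(a, top) | a. a \<in> A} \<in> R \<and>
       {(meet a b, a) | a b. a \<in> A \<and> b \<in> A} \<in> R \<and>
       {(meet a b, b) | a b. a \<in> A \<and> b \<in> A} \<in> R \<and>
       (\<forall>r\<in>R. \<forall>s\<in>R. {(a, meet b c) | a b c. (a, b) \<in> r \<and> (a, c) \<in> s} \<in> R)"
    then obtain meet top where topA: "top \<in> A" and mA: "\<forall>a\<in>A. \<forall>b\<in>A. meet a b \<in> A"
      and tau: "{(a, top) | a. a \<in> A} \<in> R"
      and lam: "{(meet a b, a) | a b. a \<in> A \<and> b \<in> A} \<in> R"
      and rho: "{(meet a b, b) | a b. a \<in> A \<and> b \<in> A} \<in> R"
      and pair: "\<And>r s. r \<in> R \<Longrightarrow> s \<in> R \<Longrightarrow>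
         {(a, meet b c) | a b c. (a, b) \<in> r \<and> (a, c) \<in> s} \<in> R"
      by blast
    have T: "uord_adjunction A R term_carrier term_rels (\<lambda>_. ()) (\<lambda>_. top)"
      unfolding uord_adjunction_def
    proof (intro conjI)
      show "monotone_map A R term_carrier term_rels (\<lambda>_. ())"
        unfolding monotone_map_def term_rels_def term_carrier_def rel_image_def by auto
      show "monotone_map term_carrier term_rels A R (\<lambda>_. top)"
        unfolding monotone_map_def
      proof (intro conjI ballI)
        show "(\<lambda>_. top) ` term_carrier \<subseteq> A" using topA unfolding term_carrier_def by auto
        fix r :: "(unit \<times> unit) set" assume "r \<in> term_rels"
        have "rel_image (\<lambda>_. top) r \<subseteq> {(a, top) | a. a \<in> A}"
          unfolding rel_image_def using topA by auto
        then show "rel_image (\<lambda>_. top) r \<in> R" by (rule down[OF tau])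
      qed
      show "map_le A R id ((\<lambda>_. top) \<circ> (\<lambda>_. ()))"
        unfolding map_le_def using tau by simp
      show "map_le term_carrier term_rels ((\<lambda>_. ()) \<circ> (\<lambda>_. top)) id"
        unfolding map_le_def term_rels_def term_carrier_def by auto
    qed
    let ?m = "\<lambda>p. meet (fst p) (snd p)"
    have M: "uord_adjunction A R (A \<times> A) (prod_rels R R) (\<lambda>a. (a, a)) ?m"
      unfolding uord_adjunction_def
    proof (intro conjI)
      show "monotone_map A R (A \<times> A) (prod_rels R R) (\<lambda>a. (a, a))"
        unfolding monotone_map_def
      proof (intro conjI ballI)
        show "(\<lambda>a. (a, a)) ` A \<subseteq> A \<times> A" by auto
        fix r assume r: "r \<in> R"
        have "rel_image (\<lambda>a. (a, a)) r \<subseteq> rel_prod r r"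
          unfolding rel_image_def rel_prod_def by auto
        then show "rel_image (\<lambda>a. (a, a)) r \<in> prod_rels R R"
          unfolding prod_rels_def using r by blast
      qed
      show "monotone_map (A \<times> A) (prod_rels R R) A R ?m"
        unfolding monotone_map_def
      proof (intro conjI ballI)
        show "?m ` (A \<times> A) \<subseteq> A" using mA by auto
        fix q assume "q \<in> prod_rels R R"
        then obtain r s where r: "r \<in> R" and s: "s \<in> R" and q: "q \<subseteq> rel_prod r s"
          unfolding prod_rels_def by blast
        let ?L = "{(meet a b, a) | a b. a \<in> A \<and> b \<in> A}"
        let ?P = "{(meet a b, a) | a b. a \<in> A \<and> b \<in> A}"
        let ?Q = "{(meet a b, b) | a b. a \<in> A \<and> b \<in> A}"
        have h1: "rel_image ?m q \<subseteq> {(x, meet y z) | x y z. (x, y) \<in> ?P O r \<and> (x, z) \<in> ?Q O s}"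
        proof
          fix w assume "w \<in> rel_image ?m q"
          then obtain a b a' b' where w: "w = (meet a b, meet a' b')"
            "(a, a') \<in> r" "(b, b') \<in> s"
            using q unfolding rel_image_def rel_prod_def by auto
          have "a \<in> A" "b \<in> A" using w r s sub by blast+
          then have "(meet a b, a') \<in> ?P O r" "(meet a b, b') \<in> ?Q O s" using w by blast+
          then show "w \<in> {(x, meet y z) | x y z. (x, y) \<in> ?P O r \<and> (x, z) \<in> ?Q O s}"
            using w(1) by blast
        qed
        have h2: "{(x, meet y z) | x y z. (x, y) \<in> ?P O r \<and> (x, z) \<in> ?Q O s} \<in> R"
          by (rule pair[OF comp[OF lam r] comp[OF rho s]])
        show "rel_image ?m q \<in> R" by (rule down[OF h2 h1])
      qed
      show "map_le A R id (?m \<circ> (\<lambda>a. (a, a)))"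
        unfolding map_le_def
      proof -
        have "{(id a, (?m \<circ> (\<lambda>a. (a, a))) a) | a. a \<in> A}
              \<subseteq> {(x, meet y z) | x y z. (x, y) \<in> Id_on A \<and> (x, z) \<in> Id_on A}" by auto
        then show "{(id a, (?m \<circ> (\<lambda>a. (a, a))) a) | a. a \<in> A} \<in> R"
          by (rule down[OF pair[OF idA idA]])
      qed
      show "map_le (A \<times> A) (prod_rels R R) ((\<lambda>a. (a, a)) \<circ> ?m) id"
        unfolding map_le_def prod_rels_def
      proof -
        have "{(((\<lambda>a. (a, a)) \<circ> ?m) p, id p) | p. p \<in> A \<times> A}
          \<subseteq> rel_prod {(meet a b, a) | a b. a \<in> A \<and> b \<in> A} {(meet a b, b) | a b. a \<in> A \<and> b \<in> A}"
          unfolding rel_prod_def by fastforce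
        then show "{(((\<lambda>a. (a, a)) \<circ> ?m) p, id p) | p. p \<in> A \<times> A}
          \<in> {t. \<exists>r\<in>R. \<exists>s\<in>R. t \<subseteq> rel_prod r s}"
          using lam rho by blast
      qed
    qed
    show "cartesian_up A R" unfolding cartesian_up_def 
    proof (rule conjI)
      show "\<exists>t :: unit \<Rightarrow> 'a. uord_adjunction A R term_carrier term_rels (\<lambda>_. ()) t"
        by (rule exI[where x="\<lambda>_. top"], rule T)
      show "\<exists>m :: 'a \<times> 'a \<Rightarrow> 'a. uord_adjunction A R (A \<times> A) (prod_rels R R) (\<lambda>a. (a, a)) m"
        by (rule exI[where x="?m"], rule M)
    qed
  qed
qed

end
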